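(* Let $\Omega\subset\mathbb{R}^3$ be a bounded domain and $T>0$. Let $\{g_{h,\Delta t}\}$ be a family, indexed by $h,\Delta t>0$ with $h,\Delta t\to0$, of functions piecewise constant in time, $g_{h,\Delta t}(t,x)=\sum_n g^n_h(x)\chi_{[n\Delta t,(n+1)\Delta t)}(t)$ with $g^n_h\in L^2(\Omega)$, which converges weak-$*$ in $L^\infty([0,T];L^2(\Omega))$ as $h,\Delta t\to0$ to some $g\in L^\infty([0,T];L^2(\Omega))$ that is weakly continuous in time in $L^1(\Omega)$, i.e. $\int_\Omega g(s,x)\phi(x)\,dx\to\int_\Omega g(t,x)\phi(x)\,dx$ as $s\to t$ for every $\phi\in L^\infty(\Omega)$. Assume moreover $\|D^+_tg_{h,\Delta t}\|_{L^2([0,T];L^1(\Omega))}\le C$ with $C$ independent of $h,\Delta t$, where $D^+_tg_{h,\Delta t}(t,x)=\frac{g^{n+1}_h(x)-g^n_h(x)}{\Delta t}$ for $t\in[n\Delta t,(n+1)\Delta t)$. Then, up to a subsequence, $\int_\Omega g_{h,\Delta t}(t,x)\phi(x)\,dx\to\int_\Omega g(t,x)\phi(x)\,dx$ as $h,\Delta t\to0$, for all $t\in[0,T]$ and all $\phi\in L^\infty(\Omega)$. *)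

theory Defs
  imports "HOL-Analysis.Analysis"
begin

type_synonym R3 = "real ^ 3"

abbreviation leb_on :: "'a::euclidean_space set \<Rightarrow> 'a measure" where
  "leb_on S \<equiv> lebesgue_on S"

definition L2_on :: "R3 set \<Rightarrow> (R3 \<Rightarrow> real) \<Rightarrow> bool" where
  "L2_on \<Omega> f \<longleftrightarrow> f \<in> borel_measurable (lebesgue_on \<Omega>)
       \<and> integrable (lebesgue_on \<Omega>) (\<lambda>x. (f x)\<^sup>2)"

definition Linf_on :: "R3 set \<Rightarrow> (R3 \<Rightarrow> real) \<Rightarrow> bool" where
  "Linf_on \<Omega> f \<longleftrightarrow> f \<in> borel_measurable (lebesgue_on \<Omega>)
       \<and> (\<exists>M. AE x in lebesgue_on \<Omega>. \<bar>f x\<bar> \<le> M)"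

text \<open>g belongs to L^infinity([0,T]; L^2(Omega)): weakly (hence, by Pettis and
  separability of L^2, strongly) measurable, with essentially bounded L^2 norm.\<close>
definition Linf_L2 :: "real \<Rightarrow> R3 set \<Rightarrow> (real \<Rightarrow> R3 \<Rightarrow> real) \<Rightarrow> bool" where
  "Linf_L2 T \<Omega> g \<longleftrightarrow>
     (\<forall>\<psi>. L2_on \<Omega> \<psi> \<longrightarrow>
        (\<lambda>t. LINT x|lebesgue_on \<Omega>. g t x * \<psi> x) \<in> borel_measurable (lebesgue_on {0..T}))
   \<and> (\<exists>M. AE t in lebesgue_on {0..T}. L2_on \<Omega> (g t) \<and> (LINT x|lebesgue_on \<Omega>. (g t x)\<^sup>2) \<le> M)"

text \<open>psi belongs to L^1([0,T]; L^2(Omega)) (the predual of L^infinity([0,T]; L^2(Omega))),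
  represented by a jointly measurable function.\<close>
definition L1_L2 :: "real \<Rightarrow> R3 set \<Rightarrow> (real \<Rightarrow> R3 \<Rightarrow> real) \<Rightarrow> bool" where
  "L1_L2 T \<Omega> \<psi> \<longleftrightarrow>
     (\<lambda>(t, x). \<psi> t x) \<in> borel_measurable (lebesgue_on ({0..T} \<times> \<Omega>))
   \<and> (AE t in lebesgue_on {0..T}. L2_on \<Omega> (\<psi> t))
   \<and> integrable (lebesgue_on {0..T}) (\<lambda>t. sqrt (LINT x|lebesgue_on \<Omega>. (\<psi> t x)\<^sup>2))"

definition pair_TO :: "real \<Rightarrow> R3 set \<Rightarrow> (real \<Rightarrow> R3 \<Rightarrow> real) \<Rightarrow> (real \<Rightarrow> R3 \<Rightarrow> real) \<Rightarrow> real" where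
  "pair_TO T \<Omega> f \<psi> = (LINT t|lebesgue_on {0..T}. LINT x|lebesgue_on \<Omega>. f t x * \<psi> t x)"

definition pc_time :: "real \<Rightarrow> (nat \<Rightarrow> R3 \<Rightarrow> real) \<Rightarrow> real \<Rightarrow> R3 \<Rightarrow> real" where
  "pc_time dt G t x = G (nat \<lfloor>t / dt\<rfloor>) x"

definition Dplus :: "real \<Rightarrow> (nat \<Rightarrow> R3 \<Rightarrow> real) \<Rightarrow> real \<Rightarrow> R3 \<Rightarrow> real" where
  "Dplus dt G t x = (G (Suc (nat \<lfloor>t / dt\<rfloor>)) x - G (nat \<lfloor>t / dt\<rfloor>) x) / dt"

definition norm_L2_L1 :: "real \<Rightarrow> R3 set \<Rightarrow> (real \<Rightarrow> R3 \<Rightarrow> real) \<Rightarrow> real" where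
  "norm_L2_L1 T \<Omega> f = sqrt (LINT t|lebesgue_on {0..T}. (LINT x|lebesgue_on \<Omega>. \<bar>f t x\<bar>)\<^sup>2)"

end

theory Submission
  imports Defs
begin



lemma step_borel:
  fixes h :: "nat \<Rightarrow> real" assumes d: "d > 0"
  shows "(\<lambda>t::real. h (nat \<lfloor>t / d\<rfloor>)) \<in> borel_measurable borel"
proof -
  have "(\<lambda>t::real. \<lfloor>t / d\<rfloor>) \<in> borel \<rightarrow>\<^sub>M count_space UNIV"
    using measurable_compose[OF _ measurable_real_floor, of "\<lambda>t. t / d" borel] by measurable
  moreover have "nat \<in> count_space UNIV \<rightarrow>\<^sub>M count_space UNIV" by simp
  ultimately have a: "(\<lambda>t::real. nat \<lfloor>t / d\<rfloor>) \<in> borel \<rightarrow>\<^sub>M count_space UNIV"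
    by (rule measurable_compose)
  have b: "h \<in> count_space UNIV \<rightarrow>\<^sub>M borel" by simp
  from measurable_compose[OF a b] show ?thesis .
qed
lemma borel_to_lebesgue_on:
  fixes f :: "'a::euclidean_space \<Rightarrow> real"
  assumes "f \<in> borel_measurable borel"
  shows "f \<in> borel_measurable (lebesgue_on S)"
proof -
  have "f \<in> borel_measurable lborel" using assms by simp
  then have "f \<in> borel_measurable lebesgue" by (rule measurable_completion)
  then show ?thesis by (rule measurable_restrict_space1)
qed

lemma step_integrable:
  fixes h :: "nat \<Rightarrow> real" assumes d: "d > 0"
  shows "integrable (lebesgue_on {a..b}) (\<lambda>t::real. h (nat \<lfloor>t / d\<rfloor>))"
proof -
  have fm: "finite_measure (lebesgue_on {a..b})"
    by (rule finite_measure_lebesgue_on) simp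
  have bd: "norm (h (nat \<lfloor>t / d\<rfloor>)) \<le> (\<Sum>n\<le>nat \<lfloor>b / d\<rfloor>. \<bar>h n\<bar>)" if "t \<in> {a..b}" for t
  proof -
    have "nat \<lfloor>t / d\<rfloor> \<le> nat \<lfloor>b / d\<rfloor>"
      using that d by (intro nat_mono floor_mono divide_right_mono) auto
    then have "\<bar>h (nat \<lfloor>t / d\<rfloor>)\<bar> \<le> (\<Sum>n\<le>nat \<lfloor>b / d\<rfloor>. \<bar>h n\<bar>)"
      by (intro member_le_sum) auto
    then show ?thesis by simp
  qed
  show ?thesis
    apply (rule finite_measure.integrable_const_bound[OF fm, where B="\<Sum>n\<le>nat \<lfloor>b / d\<rfloor>. \<bar>h n\<bar>"])
    using bd apply (simp add: AE_restrict_space_iff)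
    apply (rule borel_to_lebesgue_on[OF step_borel[OF d]])
    done
qed

lemma avg_bound:
  fixes f :: "real \<Rightarrow> real"
  assumes ab: "a < b" and int: "integrable (lebesgue_on {a..b}) f"
    and bd: "\<And>s. s \<in> {a..b} \<Longrightarrow> \<bar>f s - c\<bar> \<le> e"
  shows "\<bar>(LINT s|lebesgue_on {a..b}. f s) / (b - a) - c\<bar> \<le> e"
proof -
  have eq: "(LINT s|lebesgue_on {a..b}. f s) = integral {a..b} f"
    by (rule lebesgue_integral_eq_integral[OF int]) simp
  have fi: "f integrable_on {a..b}" by (rule integrable_on_lebesgue_on[OF int]) simp
  have "integral {a..b} (\<lambda>s. f s - c) = integral {a..b} f - (b - a) * c"
    using ab by (subst integral_diff[OF fi]) auto
  moreover have "e \<ge> 0" using bd[of a] ab by auto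
  moreover have "norm (integral {a..b} (\<lambda>s. f s - c)) \<le> e * (b - a)"
  proof -
    have fic: "(\<lambda>s. f s - c) integrable_on {a..b}"
      by (rule integrable_diff[OF fi integrable_const_ivl])
    have hi: "((\<lambda>s. f s - c) has_integral integral {a..b} (\<lambda>s. f s - c)) (cbox a b)"
      using integrable_integral[OF fic] by (simp add: cbox_interval)
    show ?thesis
      using has_integral_bound[OF \<open>e \<ge> 0\<close> hi] bd ab by (simp add: cbox_interval)
  qed
  ultimately have "\<bar>integral {a..b} f - (b - a) * c\<bar> \<le> e * (b - a)"
    using ab by (simp add: cbox_interval)
  then have "\<bar>(integral {a..b} f - (b - a) * c) / (b - a)\<bar> \<le> e"
    using ab by (simp add: divide_le_eq abs_divide)
  moreover have "(integral {a..b} f - (b - a) * c) / (b - a) = integral {a..b} f / (b - a) - c"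
    using ab by (simp add: field_simps)
  ultimately show ?thesis by (simp add: eq)
qed

lemma step_lower:
  fixes h :: "nat \<Rightarrow> real" assumes d: "d > 0" and hnn: "\<And>n. h n \<ge> 0"
    and N: "real N * d \<le> T"
  shows "(\<Sum>n<N. d * h n) \<le> (LINT t|lebesgue_on {0..T}. h (nat \<lfloor>t / d\<rfloor>))"
proof -
  define f where "f = (\<lambda>t::real. h (nat \<lfloor>t / d\<rfloor>))"
  have fi: "f integrable_on {a..b}" for a b
    unfolding f_def by (rule integrable_on_lebesgue_on[OF step_integrable[OF d]]) simp
  have piece: "integral {real n * d..real (Suc n) * d} f = d * h n" for n
  proof -
    have "integral {real n * d..real (Suc n) * d} f = integral {real n * d..real (Suc n) * d} (\<lambda>_. h n)"
    proof (rule integral_spike[where S="{real (Suc n) * d}"])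
      fix x assume x: "x \<in> {real n * d..real (Suc n) * d} - {real (Suc n) * d}"
      then have "real n * d \<le> x" "x < real (Suc n) * d" by auto
      then have "real n \<le> x / d" "x / d < real n + 1" using d
        by (auto simp: field_simps)
      then have "\<lfloor>x / d\<rfloor> = int n" by (simp add: floor_eq_iff)
      then show "h n = f x" by (simp add: f_def)
    qed simp
    also have "\<dots> = d * h n" using d by (simp add: algebra_simps)
    finally show ?thesis .
  qed
  have ind: "(\<Sum>n<K. d * h n) \<le> integral {0..real K * d} f" for K
  proof (induction K)
    case 0 then show ?case by simp
  next
    case (Suc K)
    have "integral {0..real K * d} f + integral {real K * d..real (Suc K) * d} f = integral {0..real (Suc K) * d} f"
      using d by (intro Henstock_Kurzweil_Integration.integral_combine fi) auto
    then show ?case using Suc piece[of K] by simp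
  qed
  have "integral {0..real N * d} f + integral {real N * d..T} f = integral {0..T} f"
    using d N by (intro Henstock_Kurzweil_Integration.integral_combine fi) auto
  moreover have "integral {real N * d..T} f \<ge> 0"
    by (rule integral_nonneg[OF fi]) (simp add: f_def hnn)
  moreover have "(LINT t|lebesgue_on {0..T}. f t) = integral {0..T} f"
    by (rule lebesgue_integral_eq_integral[OF step_integrable[OF d, where h=h, folded f_def]]) simp
  ultimately show ?thesis using ind[of N] by (simp add: f_def)
qed




lemma phi_borel:
  assumes phi: "Linf_on \<Omega> \<phi>" and Om: "\<Omega> \<in> sets lebesgue"
  shows "\<exists>\<phi>b M. \<phi>b \<in> borel_measurable borel \<and> M \<ge> 0 \<and> (\<forall>x. \<bar>\<phi>b x\<bar> \<le> M)
     \<and> (AE x in lebesgue_on \<Omega>. \<phi> x = \<phi>b x)"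
proof -
  from phi obtain M0 where meas: "\<phi> \<in> borel_measurable (lebesgue_on \<Omega>)"
    and bd: "AE x in lebesgue_on \<Omega>. \<bar>\<phi> x\<bar> \<le> M0" unfolding Linf_on_def by blast
  have "(\<lambda>x. indicator \<Omega> x *\<^sub>R \<phi> x) \<in> borel_measurable lebesgue"
    using meas Om by (subst (asm) borel_measurable_restrict_space_iff) auto
  then obtain \<phi>1 where p1: "\<phi>1 \<in> borel_measurable lborel"
    and ae1: "AE x in lborel. indicator \<Omega> x *\<^sub>R \<phi> x = \<phi>1 x"
    using completion_ex_borel_measurable_real by blast
  define M where "M = \<bar>M0\<bar>"
  define \<phi>b where "\<phi>b = (\<lambda>x. max (- M) (min M (\<phi>1 x)))"
  have "\<phi>1 \<in> borel_measurable borel" using p1 by simp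
  then have "\<phi>b \<in> borel_measurable borel" unfolding \<phi>b_def by measurable
  moreover have "\<forall>x. \<bar>\<phi>b x\<bar> \<le> M" unfolding \<phi>b_def M_def by auto
  moreover have "AE x in lebesgue_on \<Omega>. \<phi> x = \<phi>b x"
  proof -
    have "AE x in lebesgue. indicator \<Omega> x *\<^sub>R \<phi> x = \<phi>1 x" using ae1 by (rule AE_completion)
    then have "AE x in lebesgue. x \<in> \<Omega> \<longrightarrow> \<phi> x = \<phi>1 x" by eventually_elim auto
    then have "AE x in lebesgue_on \<Omega>. \<phi> x = \<phi>1 x" using Om by (simp add: AE_restrict_space_iff)
    then show ?thesis using bd
      by eventually_elim (auto simp: \<phi>b_def M_def)
  qed
  ultimately show ?thesis unfolding M_def by (intro exI[of _ \<phi>b] exI[of _ "\<bar>M0\<bar>"]) auto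
qed

lemma L2_imp_L1:
  assumes fm: "finite_measure M" and f: "f \<in> borel_measurable M"
    and sq: "integrable M (\<lambda>x. (f x)\<^sup>2 :: real)"
  shows "integrable M f"
proof (rule Bochner_Integration.integrable_bound[where f="\<lambda>x. 1 + (f x)\<^sup>2"])
  show "integrable M (\<lambda>x. 1 + (f x)\<^sup>2)"
    by (rule Bochner_Integration.integrable_add[OF finite_measure.integrable_const[OF fm] sq])
  show "f \<in> borel_measurable M" by fact
  show "AE x in M. norm (f x) \<le> norm (1 + (f x)\<^sup>2)"
  proof (intro AE_I2)
    fix x
    have h0: "0 \<le> (\<bar>f x\<bar> - 1)\<^sup>2" by simp
    have "(\<bar>f x\<bar> - 1)\<^sup>2 = (f x)\<^sup>2 - 2 * \<bar>f x\<bar> + 1"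
      by (simp add: power2_eq_square algebra_simps abs_mult_self_eq)
    then have "\<bar>f x\<bar> \<le> 1 + (f x)\<^sup>2" using h0 by linarith
    then show "norm (f x) \<le> norm (1 + (f x)\<^sup>2)" by simp
  qed
qed

lemma integrable_mult_bdd:
  fixes f g :: "'a \<Rightarrow> real"
  assumes f: "integrable M f" and g: "g \<in> borel_measurable M" and gb: "\<And>x. \<bar>g x\<bar> \<le> B"
  shows "integrable M (\<lambda>x. f x * g x)"
proof (rule Bochner_Integration.integrable_bound[where f="\<lambda>x. B * \<bar>f x\<bar>"])
  show "integrable M (\<lambda>x. B * \<bar>f x\<bar>)" using f by (intro integrable_mult_right integrable_abs)
  show "(\<lambda>x. f x * g x) \<in> borel_measurable M" using f g by measurable
  show "AE x in M. norm (f x * g x) \<le> norm (B * \<bar>f x\<bar>)"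
  proof (intro AE_I2)
    fix x
    have "B \<ge> 0" using gb[of x] by auto
    have "\<bar>f x * g x\<bar> \<le> \<bar>f x\<bar> * B" unfolding abs_mult by (intro mult_left_mono gb) auto
    then show "norm (f x * g x) \<le> norm (B * \<bar>f x\<bar>)" using \<open>B \<ge> 0\<close> by (simp add: mult.commute)
  qed
qed




lemma pair_eq:
  assumes "0 \<le> a" "b \<le> T"
  shows "pair_TO T \<Omega> f (\<lambda>s x. indicator {a..b} s * \<phi>b x / \<delta>)
     = (LINT s|lebesgue_on {a..b}. LINT x|lebesgue_on \<Omega>. f s x * \<phi>b x) / \<delta>"
proof -
  have inner: "(LINT x|lebesgue_on \<Omega>. f s x * (indicator {a..b} s * \<phi>b x / \<delta>))
      = indicator {a..b} s * (LINT x|lebesgue_on \<Omega>. f s x * \<phi>b x) / \<delta>" for s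
  proof -
    have "(\<lambda>x. f s x * (indicator {a..b} s * \<phi>b x / \<delta>)) = (\<lambda>x. (indicator {a..b} s / \<delta>) * (f s x * \<phi>b x))"
      by (auto simp: fun_eq_iff)
    then show ?thesis by simp
  qed
  have "pair_TO T \<Omega> f (\<lambda>s x. indicator {a..b} s * \<phi>b x / \<delta>)
     = (LINT s|lebesgue_on {0..T}. indicator {a..b} s * (LINT x|lebesgue_on \<Omega>. f s x * \<phi>b x)) / \<delta>"
    unfolding pair_TO_def inner by (rule integral_divide_zero)
  also have "(LINT s|lebesgue_on {0..T}. indicator {a..b} s * (LINT x|lebesgue_on \<Omega>. f s x * \<phi>b x))
     = (LINT s|lebesgue_on {a..b}. LINT x|lebesgue_on \<Omega>. f s x * \<phi>b x)"
  proof -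
    have e: "(\<lambda>s. indicator {0..T} s *\<^sub>R (indicator {a..b} s * (LINT x|lebesgue_on \<Omega>. f s x * \<phi>b x)))
       = (\<lambda>s. indicator {a..b} s *\<^sub>R (LINT x|lebesgue_on \<Omega>. f s x * \<phi>b x))"
      using assms by (auto simp: fun_eq_iff indicator_def)
    have r1: "(LINT s|lebesgue_on {0..T}. indicator {a..b} s * (LINT x|lebesgue_on \<Omega>. f s x * \<phi>b x))
       = (LINT s|lebesgue. indicator {0..T} s *\<^sub>R (indicator {a..b} s * (LINT x|lebesgue_on \<Omega>. f s x * \<phi>b x)))"
      by (rule integral_restrict_space) simp
    have r2: "(LINT s|lebesgue_on {a..b}. (LINT x|lebesgue_on \<Omega>. f s x * \<phi>b x))
       = (LINT s|lebesgue. indicator {a..b} s *\<^sub>R (LINT x|lebesgue_on \<Omega>. f s x * \<phi>b x))"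
      by (rule integral_restrict_space) simp
    show ?thesis unfolding r1 r2 e ..
  qed
  finally show ?thesis .
qed

lemma psi_L1L2:
  assumes Om: "\<Omega> \<in> lmeasurable" and pb: "\<phi>b \<in> borel_measurable borel"
    and bd: "\<And>x. \<bar>\<phi>b x\<bar> \<le> M" and dl: "\<delta> > 0"
  shows "L1_L2 T \<Omega> (\<lambda>s x. indicator {a..b} s * \<phi>b x / \<delta>)"
  unfolding L1_L2_def
proof (intro conjI)
  have fm: "finite_measure (lebesgue_on \<Omega>)" by (rule finite_measure_lebesgue_on[OF Om])
  have sn: "(\<lambda>p::real \<times> R3. \<phi>b (snd p)) \<in> borel_measurable borel"
  proof -
    have "continuous_on UNIV (\<lambda>p::real \<times> R3. snd p)" by (intro continuous_intros)
    from measurable_compose[OF borel_measurable_continuous_onI[OF this] pb] show ?thesis .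
  qed
  have fs: "(\<lambda>p::real \<times> R3. indicator {a..b} (fst p) :: real) \<in> borel_measurable borel"
  proof -
    have "continuous_on UNIV (\<lambda>p::real \<times> R3. fst p)" by (intro continuous_intros)
    from measurable_compose[OF borel_measurable_continuous_onI[OF this] borel_measurable_indicator[of "{a..b}"]]
    show ?thesis by simp
  qed
  have "(\<lambda>p::real \<times> R3. indicator {a..b} (fst p) * \<phi>b (snd p) / \<delta>) \<in> borel_measurable borel"
    using sn fs by measurable
  then show "(\<lambda>(s, x). indicator {a..b} s * \<phi>b x / \<delta>) \<in> borel_measurable (lebesgue_on ({0..T} \<times> \<Omega>))"
    by (simp add: case_prod_beta' borel_to_lebesgue_on)
  have L2: "L2_on \<Omega> (\<lambda>x. indicator {a..b} s * \<phi>b x / \<delta>)" for s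
    unfolding L2_on_def
  proof
    show "(\<lambda>x. indicator {a..b} s * \<phi>b x / \<delta>) \<in> borel_measurable (lebesgue_on \<Omega>)"
      by (rule borel_to_lebesgue_on) (use pb in measurable)
    have "norm ((indicator {a..b} s * \<phi>b x / \<delta>)\<^sup>2) \<le> (M / \<delta>)\<^sup>2" for x
    proof -
      have "\<bar>indicator {a..b} s * \<phi>b x / \<delta>\<bar> \<le> M / \<delta>"
        using bd[of x] dl by (auto simp: indicator_def abs_mult divide_right_mono)
      then have "\<bar>indicator {a..b} s * \<phi>b x / \<delta>\<bar>\<^sup>2 \<le> (M / \<delta>)\<^sup>2"
        by (intro power_mono) auto
      then show ?thesis by (metis power2_abs real_norm_def abs_power2)
    qed
    then have ae: "AE x in lebesgue_on \<Omega>. norm ((indicator {a..b} s * \<phi>b x / \<delta>)\<^sup>2) \<le> (M / \<delta>)\<^sup>2"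
      by simp
    have ms: "(\<lambda>x. (indicator {a..b} s * \<phi>b x / \<delta>)\<^sup>2) \<in> borel_measurable (lebesgue_on \<Omega>)"
      by (rule borel_to_lebesgue_on) (use pb in measurable)
    show "integrable (lebesgue_on \<Omega>) (\<lambda>x. (indicator {a..b} s * \<phi>b x / \<delta>)\<^sup>2)"
      by (rule finite_measure.integrable_const_bound[OF fm ae ms])
  qed
  then show "AE s in lebesgue_on {0..T}. L2_on \<Omega> (\<lambda>x. indicator {a..b} s * \<phi>b x / \<delta>)"
    by simp
  define K where "K = sqrt (LINT x|lebesgue_on \<Omega>. (\<phi>b x / \<delta>)\<^sup>2)"
  have e: "(\<lambda>s. sqrt (LINT x|lebesgue_on \<Omega>. (indicator {a..b} s * \<phi>b x / \<delta>)\<^sup>2))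
      = (\<lambda>s. indicator {a..b} s * K)"
    by (auto simp: fun_eq_iff indicator_def K_def)
  have fm2: "finite_measure (lebesgue_on {0..T})" by (rule finite_measure_lebesgue_on) simp
  show "integrable (lebesgue_on {0..T}) (\<lambda>s. sqrt (LINT x|lebesgue_on \<Omega>. (indicator {a..b} s * \<phi>b x / \<delta>)\<^sup>2))"
    unfolding e
    by (intro finite_measure.integrable_const_bound[OF fm2, where B="\<bar>K\<bar>"] AE_I2 borel_to_lebesgue_on)
       (auto simp: indicator_def)
qed





lemma amgm: fixes c d e :: real assumes "d > 0" "e > 0"
  shows "c \<le> e * c\<^sup>2 / (2 * d) + d / (2 * e)"
proof -
  have "0 \<le> (e * c - d)\<^sup>2" by simp
  moreover have "(e * c - d)\<^sup>2 = e\<^sup>2 * c\<^sup>2 + d\<^sup>2 - 2 * e * c * d" by (simp add: power2_eq_square algebra_simps)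
  ultimately have "2 * e * c * d \<le> e\<^sup>2 * c\<^sup>2 + d\<^sup>2" by linarith
  then have "2 * e * c * d / (2 * e * d) \<le> (e\<^sup>2 * c\<^sup>2 + d\<^sup>2) / (2 * e * d)"
    using assms by (intro divide_right_mono) auto
  moreover have "2 * e * c * d / (2 * e * d) = c" using assms by simp
  moreover have "(e\<^sup>2 * c\<^sup>2 + d\<^sup>2) / (2 * e * d) = e * c\<^sup>2 / (2 * d) + d / (2 * e)"
    using assms by (simp add: field_simps power2_eq_square)
  ultimately show ?thesis by simp
qed

lemma seq_est:
  fixes G :: "nat \<Rightarrow> R3 \<Rightarrow> real" and \<phi>b :: "R3 \<Rightarrow> real"
  assumes Om: "\<Omega> \<in> lmeasurable" and GL2: "\<And>n. L2_on \<Omega> (G n)"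
    and pb: "\<phi>b \<in> borel_measurable borel" and bd: "\<And>x. \<bar>\<phi>b x\<bar> \<le> M"
    and d: "d > 0" and Db: "norm_L2_L1 T \<Omega> (Dplus d G) \<le> C"
    and s: "s \<in> {0..T}" and t: "t \<in> {0..T}" and e: "e > 0"
  shows "\<bar>(LINT x|lebesgue_on \<Omega>. pc_time d G t x * \<phi>b x) - (LINT x|lebesgue_on \<Omega>. pc_time d G s x * \<phi>b x)\<bar>
     \<le> M * (e * C\<^sup>2 / 2 + (\<bar>t - s\<bar> + d) / (2 * e))"
proof -
  have fm: "finite_measure (lebesgue_on \<Omega>)" by (rule finite_measure_lebesgue_on[OF Om])
  have M0: "M \<ge> 0" using bd[of 0] by auto
  have pbl: "\<phi>b \<in> borel_measurable (lebesgue_on \<Omega>)" by (rule borel_to_lebesgue_on[OF pb])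
  have GL1: "integrable (lebesgue_on \<Omega>) (G n)" for n
    using L2_imp_L1[OF fm] GL2[of n] unfolding L2_on_def by blast
  have GP: "integrable (lebesgue_on \<Omega>) (\<lambda>x. G n x * \<phi>b x)" for n
    by (rule integrable_mult_bdd[OF GL1 pbl bd])
  define H where "H n = (LINT x|lebesgue_on \<Omega>. G n x * \<phi>b x)" for n
  define c where "c n = (LINT x|lebesgue_on \<Omega>. \<bar>G (Suc n) x - G n x\<bar>)" for n
  have c0: "c n \<ge> 0" for n unfolding c_def by simp
  have step: "\<bar>H (Suc n) - H n\<bar> \<le> M * c n" for n
  proof -
    have "H (Suc n) - H n = (LINT x|lebesgue_on \<Omega>. (G (Suc n) x - G n x) * \<phi>b x)"
      unfolding H_def by (subst Bochner_Integration.integral_diff[OF GP GP, symmetric]) (simp add: algebra_simps)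
    also have "\<bar>\<dots>\<bar> \<le> (LINT x|lebesgue_on \<Omega>. \<bar>(G (Suc n) x - G n x) * \<phi>b x\<bar>)"
      by (rule integral_abs_bound)
    also have "\<dots> \<le> (LINT x|lebesgue_on \<Omega>. M * \<bar>G (Suc n) x - G n x\<bar>)"
    proof (rule integral_mono)
      show "integrable (lebesgue_on \<Omega>) (\<lambda>x. \<bar>(G (Suc n) x - G n x) * \<phi>b x\<bar>)"
        by (intro integrable_abs integrable_mult_bdd[OF _ pbl bd] Bochner_Integration.integrable_diff GL1)
      show "integrable (lebesgue_on \<Omega>) (\<lambda>x. M * \<bar>G (Suc n) x - G n x\<bar>)"
        by (intro integrable_mult_right integrable_abs Bochner_Integration.integrable_diff GL1)
      fix x
      show "\<bar>(G (Suc n) x - G n x) * \<phi>b x\<bar> \<le> M * \<bar>G (Suc n) x - G n x\<bar>"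
        unfolding abs_mult using mult_left_mono[OF bd[of x] abs_ge_zero[of "G (Suc n) x - G n x"]]
        by (simp add: mult.commute)
    qed
    also have "\<dots> = M * c n" unfolding c_def by simp
    finally show ?thesis .
  qed
  have chain: "\<bar>H n - H m\<bar> \<le> M * (\<Sum>j\<in>{m..<n}. c j)" if "m \<le> n" for m n
    using that
  proof (induction n rule: dec_induct)
    case base then show ?case by simp
  next
    case (step n)
    have "\<bar>H (Suc n) - H m\<bar> \<le> \<bar>H (Suc n) - H n\<bar> + \<bar>H n - H m\<bar>" by simp
    also have "\<dots> \<le> M * c n + M * (\<Sum>j\<in>{m..<n}. c j)" using step.IH \<open>\<And>n. \<bar>H (Suc n) - H n\<bar> \<le> M * c n\<close>[of n] by simp
    also have "\<dots> = M * (\<Sum>j\<in>{m..<Suc n}. c j)" using step.hyps by (simp add: algebra_simps)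
    finally show ?case .
  qed
  have sq: "(\<Sum>j<N. (c j)\<^sup>2) \<le> d * C\<^sup>2" if N: "real N * d \<le> T" for N
  proof -
    define X where "X = (LINT t|lebesgue_on {0..T}. (LINT x|lebesgue_on \<Omega>. \<bar>Dplus d G t x\<bar>)\<^sup>2)"
    have fe: "(\<lambda>t. (LINT x|lebesgue_on \<Omega>. \<bar>Dplus d G t x\<bar>)\<^sup>2) = (\<lambda>t. (c (nat \<lfloor>t / d\<rfloor>) / d)\<^sup>2)"
      using d by (simp add: fun_eq_iff Dplus_def abs_divide c_def)
    have "(\<Sum>n<N. d * (c n / d)\<^sup>2) \<le> X"
      unfolding X_def fe by (rule step_lower[OF d _ N]) simp
    moreover have X0: "X \<ge> 0" unfolding X_def by simp
    moreover have "sqrt X \<le> C" using Db unfolding norm_L2_L1_def X_def .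
    moreover have "X \<le> C\<^sup>2"
    proof -
      have "X = (sqrt X)\<^sup>2" using real_sqrt_pow2[OF X0] by simp
      also have "\<dots> \<le> C\<^sup>2" by (rule power_mono[OF \<open>sqrt X \<le> C\<close>]) (simp add: X0)
      finally show ?thesis .
    qed
    ultimately have "(\<Sum>n<N. d * (c n / d)\<^sup>2) \<le> C\<^sup>2" by linarith
    moreover have "(\<Sum>n<N. d * (c n / d)\<^sup>2) = (\<Sum>n<N. (c n)\<^sup>2) / d"
      using d by (simp add: sum_divide_distrib power2_eq_square)
    ultimately show ?thesis using d by (simp add: divide_le_eq mult.commute)
  qed
  have main: "\<bar>H (nat \<lfloor>t / d\<rfloor>) - H (nat \<lfloor>s / d\<rfloor>)\<bar> \<le> M * (e * C\<^sup>2 / 2 + (t - s + d) / (2 * e))"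
    if st: "s \<le> t" "s \<in> {0..T}" "t \<in> {0..T}" for s t
  proof -
    define m where "m = nat \<lfloor>s / d\<rfloor>"
    define n where "n = nat \<lfloor>t / d\<rfloor>"
    have mn: "m \<le> n" unfolding m_def n_def using st d by (intro nat_mono floor_mono divide_right_mono) auto
    have nd: "real n * d \<le> t"
    proof -
      have "t / d \<ge> 0" using st d by auto
      then have "real n = of_int \<lfloor>t / d\<rfloor>" unfolding n_def by simp
      also have "\<dots> \<le> t / d" by simp
      finally show ?thesis using d by (simp add: le_divide_eq)
    qed
    have md: "real m * d > s - d"
    proof -
      have "s / d \<ge> 0" using st d by auto
      then have "real m = of_int \<lfloor>s / d\<rfloor>" unfolding m_def by simp
      moreover have "s / d - 1 < of_int \<lfloor>s / d\<rfloor>" by linarith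
      ultimately have "s / d - 1 < real m" by simp
      then show ?thesis using d by (simp add: field_simps)
    qed
    have "(\<Sum>j\<in>{m..<n}. c j) \<le> (\<Sum>j\<in>{m..<n}. e * (c j)\<^sup>2 / (2 * d) + d / (2 * e))"
      by (intro sum_mono amgm d e)
    also have "\<dots> = e / (2 * d) * (\<Sum>j\<in>{m..<n}. (c j)\<^sup>2) + (real n - real m) * (d / (2 * e))"
      using mn by (simp add: sum.distrib sum_distrib_left of_nat_diff)
    also have "\<dots> \<le> e / (2 * d) * (d * C\<^sup>2) + (t - s + d) / (2 * e)"
    proof (intro add_mono mult_left_mono)
      have "(\<Sum>j\<in>{m..<n}. (c j)\<^sup>2) \<le> (\<Sum>j<n. (c j)\<^sup>2)"
        by (intro sum_mono2) auto
      also have "\<dots> \<le> d * C\<^sup>2" using sq[of n] nd st by auto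
      finally show "(\<Sum>j\<in>{m..<n}. (c j)\<^sup>2) \<le> d * C\<^sup>2" .
      have "(real n - real m) * d \<le> t - s + d" using nd md by (simp add: algebra_simps)
      then have "((real n - real m) * d) / (2 * e) \<le> (t - s + d) / (2 * e)"
        using e by (intro divide_right_mono) auto
      then show "(real n - real m) * (d / (2 * e)) \<le> (t - s + d) / (2 * e)"
        by simp
    qed (use d e in auto)
    also have "\<dots> = e * C\<^sup>2 / 2 + (t - s + d) / (2 * e)" using d e by (simp add: field_simps)
    finally have S: "(\<Sum>j\<in>{m..<n}. c j) \<le> e * C\<^sup>2 / 2 + (t - s + d) / (2 * e)" .
    have "\<bar>H n - H m\<bar> \<le> M * (\<Sum>j\<in>{m..<n}. c j)" by (rule chain[OF mn])
    also have "\<dots> \<le> M * (e * C\<^sup>2 / 2 + (t - s + d) / (2 * e))" using S M0 by (intro mult_left_mono)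
    finally show ?thesis unfolding m_def n_def .
  qed
  have eqF: "(LINT x|lebesgue_on \<Omega>. pc_time d G u x * \<phi>b x) = H (nat \<lfloor>u / d\<rfloor>)" for u
    unfolding H_def pc_time_def ..
  show ?thesis
  proof (cases "s \<le> t")
    case True then show ?thesis using main[OF True s t] unfolding eqF by simp
  next
    case False then show ?thesis using main[of t s] s t unfolding eqF by (simp add: abs_minus_commute)
  qed
qed




lemma cont_integrable:
  fixes f :: "real \<Rightarrow> real"
  assumes "continuous_on {a..b} f"
  shows "integrable (lebesgue_on {a..b}) f"
proof -
  have "f absolutely_integrable_on {a..b}" by (rule absolutely_integrable_continuous_real[OF assms])
  then show ?thesis by (simp add: set_integrable_def integrable_restrict_space)
qed

theorem lemmaA2:
  fixes \<Omega> :: "R3 set" and T :: real and C :: real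
    and h dt :: "nat \<Rightarrow> real"
    and G :: "nat \<Rightarrow> nat \<Rightarrow> R3 \<Rightarrow> real"
    and g :: "real \<Rightarrow> R3 \<Rightarrow> real"
  assumes dom: "open \<Omega>" "connected \<Omega>" "bounded \<Omega>" "\<Omega> \<noteq> {}"
    and T: "T > 0"
    and hpos: "\<And>k. h k > 0" and dtpos: "\<And>k. dt k > 0"
    and h0: "h \<longlonglongrightarrow> 0" and dt0: "dt \<longlonglongrightarrow> 0"
    and GL2: "\<And>k n. L2_on \<Omega> (G k n)"
    and gLinf: "Linf_L2 T \<Omega> g"
    and weakstar: "\<And>\<psi>. L1_L2 T \<Omega> \<psi> \<Longrightarrow>
        (\<lambda>k. pair_TO T \<Omega> (pc_time (dt k) (G k)) \<psi>) \<longlonglongrightarrow> pair_TO T \<Omega> g \<psi>"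
    and gL1: "\<And>t. t \<in> {0..T} \<Longrightarrow> integrable (lebesgue_on \<Omega>) (g t)"
    and gcont: "\<And>\<phi> t. Linf_on \<Omega> \<phi> \<Longrightarrow> t \<in> {0..T} \<Longrightarrow>
        ((\<lambda>s. LINT x|lebesgue_on \<Omega>. g s x * \<phi> x) \<longlongrightarrow> (LINT x|lebesgue_on \<Omega>. g t x * \<phi> x))
          (at t within {0..T})"
    and Dbound: "\<And>k. norm_L2_L1 T \<Omega> (Dplus (dt k) (G k)) \<le> C"
  shows "\<exists>r::nat \<Rightarrow> nat. strict_mono r \<and>
     (\<forall>t \<in> {0..T}. \<forall>\<phi>. Linf_on \<Omega> \<phi> \<longrightarrow>
        (\<lambda>k. LINT x|lebesgue_on \<Omega>. pc_time (dt (r k)) (G (r k)) t x * \<phi> x)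
          \<longlonglongrightarrow> (LINT x|lebesgue_on \<Omega>. g t x * \<phi> x))"
proof -
  have Om: "\<Omega> \<in> lmeasurable" using dom by (intro lmeasurable_open) auto
  have Oms: "\<Omega> \<in> sets lebesgue" using Om by (rule fmeasurableD)
  have "0 \<le> norm_L2_L1 T \<Omega> (Dplus (dt 0) (G 0))" unfolding norm_L2_L1_def by simp
  then have C0: "C \<ge> 0" using Dbound[of 0] by linarith
  show ?thesis
  proof (intro exI[of _ id] conjI ballI allI impI)
    show "strict_mono (id :: nat \<Rightarrow> nat)" by (simp add: strict_mono_def)
    fix t \<phi> assume t: "t \<in> {0..T}" and \<phi>: "Linf_on \<Omega> \<phi>"
    obtain \<phi>b M where pb: "\<phi>b \<in> borel_measurable borel" and M0: "M \<ge> 0"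
      and bd: "\<forall>x. \<bar>\<phi>b x\<bar> \<le> M" and ae: "AE x in lebesgue_on \<Omega>. \<phi> x = \<phi>b x"
      using phi_borel[OF \<phi> Oms] by blast
    have bd': "\<And>x. \<bar>\<phi>b x\<bar> \<le> M" using bd by blast
    have pbl: "\<phi>b \<in> borel_measurable (lebesgue_on \<Omega>)" by (rule borel_to_lebesgue_on[OF pb])
    have Linfb: "Linf_on \<Omega> \<phi>b" unfolding Linf_on_def
      by (intro conjI pbl exI[of _ M] AE_I2) (simp add: bd')
    define F where "F k s = (LINT x|lebesgue_on \<Omega>. pc_time (dt k) (G k) s x * \<phi>b x)" for k s
    define Gf where "Gf s = (LINT x|lebesgue_on \<Omega>. g s x * \<phi>b x)" for s
    have cont: "continuous_on {0..T} Gf"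
      unfolding continuous_on_def Gf_def using gcont[OF Linfb] by blast
    have conv: "(\<lambda>k. F k t) \<longlonglongrightarrow> Gf t"
    proof (rule LIMSEQ_I)
      fix \<eta> :: real assume \<eta>: "\<eta> > 0"
      define \<epsilon> where "\<epsilon> = 2 * \<eta> / (5 * (M * C\<^sup>2 + 1))"
      have MC: "M * C\<^sup>2 \<ge> 0" using M0 by simp
      have \<epsilon>0: "\<epsilon> > 0" unfolding \<epsilon>_def using \<eta> MC by (intro divide_pos_pos) auto
      have t1: "M * (\<epsilon> * C\<^sup>2 / 2) \<le> \<eta> / 5"
      proof -
        have "M * (\<epsilon> * C\<^sup>2 / 2) = (\<eta> / 5) * (M * C\<^sup>2 / (M * C\<^sup>2 + 1))"
          unfolding \<epsilon>_def using MC by (simp add: field_simps)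
        also have "\<dots> \<le> (\<eta> / 5) * 1"
          using \<eta> MC by (intro mult_left_mono) auto
        finally show ?thesis by simp
      qed
      obtain \<delta>0 where \<delta>0: "\<delta>0 > 0"
        and cg: "\<And>s. s \<in> {0..T} \<Longrightarrow> dist s t < \<delta>0 \<Longrightarrow> dist (Gf s) (Gf t) < \<eta> / 5"
        using cont t \<eta> unfolding continuous_on_iff by (metis zero_less_divide_iff zero_less_numeral)
      define \<delta> where "\<delta> = min (min T (\<delta>0 / 2)) (\<eta> * \<epsilon> / (5 * (M + 1)))"
      have \<delta>pos: "\<delta> > 0" unfolding \<delta>_def using T \<delta>0 \<eta> \<epsilon>0 M0 by auto
      have \<delta>T: "\<delta> \<le> T" and \<delta>\<delta>0: "\<delta> < \<delta>0" unfolding \<delta>_def using \<delta>0 by auto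
      have t2: "M * \<delta> / \<epsilon> \<le> \<eta> / 5"
      proof -
        have "M * \<delta> \<le> M * (\<eta> * \<epsilon> / (5 * (M + 1)))"
          using M0 unfolding \<delta>_def by (intro mult_left_mono) auto
        also have "\<dots> = (\<eta> * \<epsilon> / 5) * (M / (M + 1))" using M0 by (simp add: field_simps)
        also have "\<dots> \<le> (\<eta> * \<epsilon> / 5) * 1" using M0 \<eta> \<epsilon>0 by (intro mult_left_mono) auto
        finally show ?thesis using \<epsilon>0 by (simp add: divide_le_eq mult.commute)
      qed
      define a where "a = min t (T - \<delta>)"
      have a0: "0 \<le> a" and aT: "a + \<delta> \<le> T" and at: "a \<le> t" and ta: "t \<le> a + \<delta>"
        unfolding a_def using t \<delta>T \<delta>pos by (auto simp: min_def)
      have I_sub: "\<And>s. s \<in> {a..a+\<delta>} \<Longrightarrow> s \<in> {0..T}" using a0 aT by auto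
      have I_near: "\<And>s. s \<in> {a..a+\<delta>} \<Longrightarrow> \<bar>s - t\<bar> \<le> \<delta>" using at ta by auto
      define \<psi> where "\<psi> = (\<lambda>s x. indicator {a..a+\<delta>} s * \<phi>b x / \<delta>)"
      have L: "L1_L2 T \<Omega> \<psi>" unfolding \<psi>_def by (rule psi_L1L2[OF Om pb bd' \<delta>pos])
      define A where "A k = (LINT s|lebesgue_on {a..a+\<delta>}. F k s) / \<delta>" for k
      define Ai where "Ai = (LINT s|lebesgue_on {a..a+\<delta>}. Gf s) / \<delta>"
      have pk: "pair_TO T \<Omega> (pc_time (dt k) (G k)) \<psi> = A k" for k
        unfolding \<psi>_def A_def F_def by (rule pair_eq[OF a0 aT])
      have pg: "pair_TO T \<Omega> g \<psi> = Ai"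
        unfolding \<psi>_def Ai_def Gf_def by (rule pair_eq[OF a0 aT])
      have Aconv: "A \<longlonglongrightarrow> Ai" using weakstar[OF L] unfolding pk pg .
      obtain N1 where N1: "\<And>k. k \<ge> N1 \<Longrightarrow> norm (A k - Ai) < \<eta> / 5"
        using LIMSEQ_D[OF Aconv, of "\<eta> / 5"] \<eta> by auto
      obtain N2 where N2: "\<And>k. k \<ge> N2 \<Longrightarrow> norm (dt k - 0) < \<delta>"
        using LIMSEQ_D[OF dt0 \<delta>pos] by auto
      have E2: "\<bar>Ai - Gf t\<bar> \<le> \<eta> / 5"
      proof -
        have ci: "integrable (lebesgue_on {a..a+\<delta>}) Gf"
          by (rule cont_integrable) (rule continuous_on_subset[OF cont], use I_sub in auto)
        have "\<bar>(LINT s|lebesgue_on {a..a+\<delta>}. Gf s) / (a + \<delta> - a) - Gf t\<bar> \<le> \<eta> / 5"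
        proof (rule avg_bound)
          show "a < a + \<delta>" using \<delta>pos by simp
          show "integrable (lebesgue_on {a..a+\<delta>}) Gf" by (rule ci)
          fix s assume s: "s \<in> {a..a+\<delta>}"
          have "dist s t < \<delta>0" using I_near[OF s] \<delta>\<delta>0 by (simp add: dist_real_def)
          then show "\<bar>Gf s - Gf t\<bar> \<le> \<eta> / 5" using cg[OF I_sub[OF s]] by (simp add: dist_real_def)
        qed
        then show ?thesis unfolding Ai_def by simp
      qed
      show "\<exists>no. \<forall>k\<ge>no. norm (F k t - Gf t) < \<eta>"
      proof (intro exI[of _ "max N1 N2"] allI impI)
        fix k assume k: "k \<ge> max N1 N2"
        have dk: "dt k < \<delta>" using N2[of k] k dtpos[of k] by simp
        have E1: "\<bar>A k - F k t\<bar> \<le> M * (\<epsilon> * C\<^sup>2 / 2 + (\<delta> + dt k) / (2 * \<epsilon>))"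
        proof -
          have Fk: "F k = (\<lambda>s. (\<lambda>n. LINT x|lebesgue_on \<Omega>. G k n x * \<phi>b x) (nat \<lfloor>s / dt k\<rfloor>))"
            unfolding F_def pc_time_def by (rule ext) simp
          have "\<bar>(LINT s|lebesgue_on {a..a+\<delta>}. F k s) / (a + \<delta> - a) - F k t\<bar>
                \<le> M * (\<epsilon> * C\<^sup>2 / 2 + (\<delta> + dt k) / (2 * \<epsilon>))"
          proof (rule avg_bound)
            show "a < a + \<delta>" using \<delta>pos by simp
            show "integrable (lebesgue_on {a..a+\<delta>}) (F k)"
              unfolding Fk by (rule step_integrable[OF dtpos])
            fix s assume s: "s \<in> {a..a+\<delta>}"
            have "\<bar>F k s - F k t\<bar> \<le> M * (\<epsilon> * C\<^sup>2 / 2 + (\<bar>s - t\<bar> + dt k) / (2 * \<epsilon>))"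
              unfolding F_def
              by (rule seq_est[OF Om GL2[of k] pb bd' dtpos[of k] Dbound[of k] t I_sub[OF s] \<epsilon>0])
            also have "\<dots> \<le> M * (\<epsilon> * C\<^sup>2 / 2 + (\<delta> + dt k) / (2 * \<epsilon>))"
              using I_near[OF s] \<epsilon>0 M0 by (intro mult_left_mono add_left_mono divide_right_mono) auto
            finally show "\<bar>F k s - F k t\<bar> \<le> M * (\<epsilon> * C\<^sup>2 / 2 + (\<delta> + dt k) / (2 * \<epsilon>))" .
          qed
          then show ?thesis unfolding A_def by simp
        qed
        have "M * ((\<delta> + dt k) / (2 * \<epsilon>)) \<le> M * ((2 * \<delta>) / (2 * \<epsilon>))"
          using dk \<epsilon>0 M0 by (intro mult_left_mono divide_right_mono) auto
        also have "\<dots> = M * \<delta> / \<epsilon>" by simp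
        finally have t3: "M * ((\<delta> + dt k) / (2 * \<epsilon>)) \<le> \<eta> / 5" using t2 by linarith
        have dl: "M * (\<epsilon> * C\<^sup>2 / 2 + (\<delta> + dt k) / (2 * \<epsilon>)) = M * (\<epsilon> * C\<^sup>2 / 2) + M * ((\<delta> + dt k) / (2 * \<epsilon>))"
          by (rule distrib_left)
        have E1': "\<bar>A k - F k t\<bar> \<le> 2 * \<eta> / 5"
          using E1 t1 t3 unfolding dl by linarith
        have "\<bar>A k - Ai\<bar> < \<eta> / 5" using N1[of k] k by simp
        then have "\<bar>F k t - Gf t\<bar> < \<eta>" using E1' E2 \<eta> by linarith
        then show "norm (F k t - Gf t) < \<eta>" by simp
      qed
    qed
    have mG: "G k n \<in> borel_measurable (lebesgue_on \<Omega>)" for k n using GL2[of k n] by (simp add: L2_on_def)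
    have m\<phi>: "\<phi> \<in> borel_measurable (lebesgue_on \<Omega>)" using \<phi> by (simp add: Linf_on_def)
    have eqF: "(LINT x|lebesgue_on \<Omega>. pc_time (dt (id k)) (G (id k)) t x * \<phi> x) = F k t" for k
      unfolding F_def
    proof (rule integral_cong_AE)
      show "(\<lambda>x. pc_time (dt (id k)) (G (id k)) t x * \<phi> x) \<in> borel_measurable (lebesgue_on \<Omega>)"
        unfolding pc_time_def using mG m\<phi> by simp
      show "(\<lambda>x. pc_time (dt k) (G k) t x * \<phi>b x) \<in> borel_measurable (lebesgue_on \<Omega>)"
        unfolding pc_time_def using mG pbl by simp
      show "AE x in lebesgue_on \<Omega>. pc_time (dt (id k)) (G (id k)) t x * \<phi> x = pc_time (dt k) (G k) t x * \<phi>b x"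
        using ae by eventually_elim simp
    qed
    have eqG: "(LINT x|lebesgue_on \<Omega>. g t x * \<phi> x) = Gf t"
      unfolding Gf_def
    proof (rule integral_cong_AE)
      have mg: "g t \<in> borel_measurable (lebesgue_on \<Omega>)" using gL1[OF t] by auto
      show "(\<lambda>x. g t x * \<phi> x) \<in> borel_measurable (lebesgue_on \<Omega>)" using mg m\<phi> by simp
      show "(\<lambda>x. g t x * \<phi>b x) \<in> borel_measurable (lebesgue_on \<Omega>)" using mg pbl by simp
      show "AE x in lebesgue_on \<Omega>. g t x * \<phi> x = g t x * \<phi>b x"
        using ae by eventually_elim simp
    qed
    show "(\<lambda>k. LINT x|lebesgue_on \<Omega>. pc_time (dt (id k)) (G (id k)) t x * \<phi> x)
          \<longlonglongrightarrow> (LINT x|lebesgue_on \<Omega>. g t x * \<phi> x)"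
      unfolding eqF eqG by (rule conv)
  qed
qed


end
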